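(* Let $Q$ be a quiver, $\mathcal A=\Lambda Q/\langle P_1,\dots,P_K\rangle$ a completed path algebra with relations, $G$ a finite group with a formal dual group action $\mathfrak f$ on $\mathcal A$, and $W\in\mathcal A$ invariant under the formal dual group action. Let $\hat{\mathcal A}=\Lambda(Q\# G)/\langle P_i^g: g\in G,\ i=1,\dots,K\rangle$ and $\hat W=\sum_{g\in G}W^g$. If $W$ is a central element of $\mathcal A$, then $\hat W$ is a central element of $\hat{\mathcal A}$.
   Context: Paths are written right to left ($x_p\cdots x_1$ means first $x_1$). A formal dual group action is a function $\mathfrak f$ from the arrows of $Q$ to $G$ such that, for each $l$, all paths occurring in $P_l$ have the same image $g_l$, where a path $x_p\cdots x_1$ is mapped to $\mathfrak f(x_1)\cdots\mathfrak f(x_p)$. $W$ is invariant if it has a representative in $\Lambda Q$ all of whose terms map to $1$; this representative is used to define $W^g$. The quiver $Q\# G$ has vertices $v^g$ for $v$ a vertex of $Q$ and $g\in G$, and for each arrow $x:u\to v$ of $Q$ and each $h\in G$ an arrow $x^h$ from $u^h$ to $v^{h\mathfrak f(x)}$. The lift of a path $x_k\cdots x_1$ of $Q$ by $g\in G$ is the path $x_k^{g_k}\cdots x_1^{g_1}$ of $Q\#G$ with $g_1=g$ and $g_{i+1}=g_i\mathfrak f(x_i)$ (a trivial path $\pi_v$ lifts to $\pi_{v^g}$); extended linearly this gives $\Lambda Q\to\Lambda(Q\#G)$, $P\mapsto P^g$. The ideals are completed two-sided ideals. *)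

theory Defs
  imports "HOL-Algebra.Group"
begin

text \<open>A path is a pair (v, [x1, ..., xp]) : start vertex v and the arrows in the order
  they are traversed (x1 first); in the paper's right-to-left notation this is
  the path xp ... x1.\<close>

fun chain :: "('a \<Rightarrow> 'v) \<Rightarrow> ('a \<Rightarrow> 'v) \<Rightarrow> 'v \<Rightarrow> 'a list \<Rightarrow> bool" where
  "chain src tgt v [] = True"
| "chain src tgt v (x # xs) = (src x = v \<and> chain src tgt (tgt x) xs)"

definition is_path :: "'v set \<Rightarrow> 'a set \<Rightarrow> ('a \<Rightarrow> 'v) \<Rightarrow> ('a \<Rightarrow> 'v) \<Rightarrow> 'v \<times> 'a list \<Rightarrow> bool" where
  "is_path V E src tgt p \<longleftrightarrow> fst p \<in> V \<and> set (snd p) \<subseteq> E \<and> chain src tgt (fst p) (snd p)"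

definition path_end :: "('a \<Rightarrow> 'v) \<Rightarrow> 'v \<times> 'a list \<Rightarrow> 'v" where
  "path_end tgt p = (if snd p = [] then fst p else tgt (last (snd p)))"

text \<open>Completed path algebra: arbitrary (possibly infinite) formal k-linear
  combinations of paths, i.e. coefficient functions supported on paths.\<close>

definition cpa :: "'v set \<Rightarrow> 'a set \<Rightarrow> ('a \<Rightarrow> 'v) \<Rightarrow> ('a \<Rightarrow> 'v) \<Rightarrow> ('v \<times> 'a list \<Rightarrow> 'k::zero) set" where
  "cpa V E src tgt = {F. \<forall>p. \<not> is_path V E src tgt p \<longrightarrow> F p = 0}"

text \<open>Multiplication: F * H is concatenation "F after H" (H is traversed first),
  matching the convention that x_p ... x_1 is the product of arrows.\<close>

definition cpa_mult :: "('a \<Rightarrow> 'v) \<Rightarrow> ('v \<times> 'a list \<Rightarrow> 'k::comm_ring_1)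
      \<Rightarrow> ('v \<times> 'a list \<Rightarrow> 'k) \<Rightarrow> ('v \<times> 'a list \<Rightarrow> 'k)" where
  "cpa_mult tgt F H = (\<lambda>p. \<Sum>i\<le>length (snd p).
      F (path_end tgt (fst p, take i (snd p)), drop i (snd p)) * H (fst p, take i (snd p)))"

inductive_set gen_ideal :: "'v set \<Rightarrow> 'a set \<Rightarrow> ('a \<Rightarrow> 'v) \<Rightarrow> ('a \<Rightarrow> 'v)
    \<Rightarrow> ('v \<times> 'a list \<Rightarrow> 'k::comm_ring_1) set \<Rightarrow> ('v \<times> 'a list \<Rightarrow> 'k) set"
  for V E src tgt S where
  zero: "(\<lambda>_. 0) \<in> gen_ideal V E src tgt S"
| gen: "r \<in> S \<Longrightarrow> a \<in> cpa V E src tgt \<Longrightarrow> b \<in> cpa V E src tgt \<Longrightarrow>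
        cpa_mult tgt a (cpa_mult tgt r b) \<in> gen_ideal V E src tgt S"
| add: "x \<in> gen_ideal V E src tgt S \<Longrightarrow> y \<in> gen_ideal V E src tgt S \<Longrightarrow>
        (\<lambda>p. x p + y p) \<in> gen_ideal V E src tgt S"

text \<open>Completed two-sided ideal: the closure of the generated ideal in the
  arrow-ideal-adic topology, i.e. the intersection over n of (I + m^n), where m^n
  consists of the elements supported on paths of length at least n.\<close>

definition closed_ideal :: "'v set \<Rightarrow> 'a set \<Rightarrow> ('a \<Rightarrow> 'v) \<Rightarrow> ('a \<Rightarrow> 'v)
    \<Rightarrow> ('v \<times> 'a list \<Rightarrow> 'k::comm_ring_1) set \<Rightarrow> ('v \<times> 'a list \<Rightarrow> 'k) set" where
  "closed_ideal V E src tgt S = {X \<in> cpa V E src tgt.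
      \<forall>n. \<exists>Y \<in> gen_ideal V E src tgt S. \<forall>p. length (snd p) < n \<longrightarrow> X p = Y p}"

definition central_mod :: "'v set \<Rightarrow> 'a set \<Rightarrow> ('a \<Rightarrow> 'v) \<Rightarrow> ('a \<Rightarrow> 'v)
    \<Rightarrow> ('v \<times> 'a list \<Rightarrow> 'k::comm_ring_1) set \<Rightarrow> ('v \<times> 'a list \<Rightarrow> 'k) \<Rightarrow> bool" where
  "central_mod V E src tgt S W \<longleftrightarrow> W \<in> cpa V E src tgt \<and>
     (\<forall>X \<in> cpa V E src tgt.
        (\<lambda>p. cpa_mult tgt W X p - cpa_mult tgt X W p) \<in> closed_ideal V E src tgt S)"

text \<open>Image of the path x_p ... x_1 (list [x1,...,xp]) is f(x1) ... f(xp).\<close>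

definition path_img :: "('g, 'b) monoid_scheme \<Rightarrow> ('a \<Rightarrow> 'g) \<Rightarrow> 'a list \<Rightarrow> 'g" where
  "path_img G f xs = foldr (\<lambda>x acc. f x \<otimes>\<^bsub>G\<^esub> acc) xs \<one>\<^bsub>G\<^esub>"

definition formal_dual_action :: "('g, 'b) monoid_scheme \<Rightarrow> 'a set \<Rightarrow> ('a \<Rightarrow> 'g)
    \<Rightarrow> (nat \<Rightarrow> 'v \<times> 'a list \<Rightarrow> 'k::zero) \<Rightarrow> nat \<Rightarrow> bool" where
  "formal_dual_action G E f P K \<longleftrightarrow> (\<forall>x\<in>E. f x \<in> carrier G) \<and>
     (\<forall>l\<in>{1..K}. \<exists>g\<in>carrier G. \<forall>p. P l p \<noteq> 0 \<longrightarrow> path_img G f (snd p) = g)"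

definition invariant_rep :: "('g, 'b) monoid_scheme \<Rightarrow> ('a \<Rightarrow> 'g)
    \<Rightarrow> ('v \<times> 'a list \<Rightarrow> 'k::zero) \<Rightarrow> bool" where
  "invariant_rep G f W \<longleftrightarrow> (\<forall>p. W p \<noteq> 0 \<longrightarrow> path_img G f (snd p) = \<one>\<^bsub>G\<^esub>)"

text \<open>Skew quiver Q#G: vertices V x G, arrows E x G, arrow x^h : u^h \<rightarrow> v^(h f(x)).\<close>

definition sk_src :: "('a \<Rightarrow> 'v) \<Rightarrow> 'a \<times> 'g \<Rightarrow> 'v \<times> 'g" where
  "sk_src src y = (src (fst y), snd y)"

definition sk_tgt :: "('g, 'b) monoid_scheme \<Rightarrow> ('a \<Rightarrow> 'v) \<Rightarrow> ('a \<Rightarrow> 'g) \<Rightarrow> 'a \<times> 'g \<Rightarrow> 'v \<times> 'g" where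
  "sk_tgt G tgt f y = (tgt (fst y), snd y \<otimes>\<^bsub>G\<^esub> f (fst y))"

fun lift_list :: "('g, 'b) monoid_scheme \<Rightarrow> ('a \<Rightarrow> 'g) \<Rightarrow> 'g \<Rightarrow> 'a list \<Rightarrow> ('a \<times> 'g) list" where
  "lift_list G f g [] = []"
| "lift_list G f g (x # xs) = (x, g) # lift_list G f (g \<otimes>\<^bsub>G\<^esub> f x) xs"

text \<open>P^g: linear (infinite-sum) extension of the lift of paths by g; since lifting
  by g is injective on paths, the coefficient of a path of Q#G is the coefficient
  of its projection if it is the lift by g of that projection, and 0 otherwise.\<close>

definition lift :: "('g, 'b) monoid_scheme \<Rightarrow> ('a \<Rightarrow> 'g) \<Rightarrow> 'g
    \<Rightarrow> ('v \<times> 'a list \<Rightarrow> 'k::zero) \<Rightarrow> ('v \<times> 'g) \<times> ('a \<times> 'g) list \<Rightarrow> 'k" where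
  "lift G f g P = (\<lambda>q. if snd (fst q) = g \<and> snd q = lift_list G f g (map fst (snd q))
                       then P (fst (fst q), map fst (snd q)) else 0)"

definition hat_sum :: "('g, 'b) monoid_scheme \<Rightarrow> ('a \<Rightarrow> 'g)
    \<Rightarrow> ('v \<times> 'a list \<Rightarrow> 'k::comm_monoid_add) \<Rightarrow> ('v \<times> 'g) \<times> ('a \<times> 'g) list \<Rightarrow> 'k" where
  "hat_sum G f W = (\<lambda>q. \<Sum>g\<in>carrier G. lift G f g W q)"

end

theory Submission
  imports Defs
begin


definition lend :: "('g,'b) monoid_scheme \<Rightarrow> ('a \<Rightarrow> 'g) \<Rightarrow> 'g \<Rightarrow> 'a list \<Rightarrow> 'g" where
  "lend G f g xs = fold (\<lambda>x acc. acc \<otimes>\<^bsub>G\<^esub> f x) xs g"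

lemma lend_Nil[simp]: "lend G f g [] = g"
  and lend_Cons[simp]: "lend G f g (x#xs) = lend G f (g \<otimes>\<^bsub>G\<^esub> f x) xs"
  by (simp_all add: lend_def)

lemma lend_append: "lend G f g (as@bs) = lend G f (lend G f g as) bs"
  by (simp add: lend_def)

lemma map_fst_lift[simp]: "map fst (lift_list G f g xs) = xs"
  by (induction xs arbitrary: g) auto

lemma length_lift[simp]: "length (lift_list G f g xs) = length xs"
  by (induction xs arbitrary: g) auto

lemma lift_append: "lift_list G f g (as@bs) = lift_list G f g as @ lift_list G f (lend G f g as) bs"
  by (induction as arbitrary: g) auto

lemma take_lift: "take i (lift_list G f g xs) = lift_list G f g (take i xs)"
  by (induction xs arbitrary: g i) (auto simp: take_Cons split: nat.split)

lemma drop_lift: "drop i (lift_list G f g xs) = lift_list G f (lend G f g (take i xs)) (drop i xs)"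
  by (induction xs arbitrary: g i) (auto simp: drop_Cons split: nat.split)

lemma cons_split: "(ys = lift_list G f g (map fst ys)) \<longleftrightarrow>
   (take i ys = lift_list G f g (map fst (take i ys)) \<and>
    drop i ys = lift_list G f (lend G f g (map fst (take i ys))) (map fst (drop i ys)))"
proof -
  have e: "lift_list G f g (map fst ys) = lift_list G f g (map fst (take i ys)) @
      lift_list G f (lend G f g (map fst (take i ys))) (map fst (drop i ys))"
    by (metis append_take_drop_id lift_append map_append)
  show ?thesis
    apply (subst e)
    apply (subst (1) append_take_drop_id[of i ys, symmetric])
    apply (subst append_eq_append_conv)
    apply simp
    apply simp
    done
qed

lemma pe_lift: "path_end (sk_tgt G tgt f) ((v,g), lift_list G f g xs) = (path_end tgt (v,xs), lend G f g xs)"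
proof (induction xs arbitrary: v g)
  case Nil then show ?case by (simp add: path_end_def)
next
  case (Cons x xs)
  show ?case
  proof (cases "xs = []")
    case True then show ?thesis by (simp add: path_end_def sk_tgt_def)
  next
    case False
    have ne: "lift_list G f (g \<otimes>\<^bsub>G\<^esub> f x) xs \<noteq> []" using False
      by (metis length_0_conv length_lift)
    from Cons.IH[of "tgt x" "g \<otimes>\<^bsub>G\<^esub> f x"] show ?thesis using False ne
      by (simp add: path_end_def)
  qed
qed

lemma sk_src_app[simp]: "sk_src src (x,h) = (src x, h)" by (simp add: sk_src_def)
lemma sk_tgt_app[simp]: "sk_tgt G tgt f (x,h) = (tgt x, h \<otimes>\<^bsub>G\<^esub> f x)" by (simp add: sk_tgt_def)

lemma chain_lift: "chain (sk_src src) (sk_tgt G tgt f) (v,g) (lift_list G f g xs) = chain src tgt v xs"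
  by (induction xs arbitrary: v g) auto

lemma chain_sk_lift: "chain (sk_src src) (sk_tgt G tgt f) (v,g) ys \<Longrightarrow> ys = lift_list G f g (map fst ys)"
proof (induction ys arbitrary: v g)
  case Nil then show ?case by simp
next
  case (Cons y ys)
  obtain x h where y: "y = (x,h)" by (cases y)
  from Cons.prems y have "h = g" and "chain (sk_src src) (sk_tgt G tgt f) (tgt x, g \<otimes>\<^bsub>G\<^esub> f x) ys"
    by auto
  with Cons.IH y show ?case by auto
qed

lemma lift_at: "lift G f g A ((v,g0),ys) = (if g0 = g \<and> ys = lift_list G f g (map fst ys) then A (v, map fst ys) else 0)"
  by (simp add: lift_def)

definition lift_supp :: "('g,'b) monoid_scheme \<Rightarrow> ('a \<Rightarrow> 'g) \<Rightarrow> (('v \<times> 'g) \<times> ('a \<times> 'g) list \<Rightarrow> 'k::zero) \<Rightarrow> bool" where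
  "lift_supp G f F \<longleftrightarrow> (\<forall>q. F q \<noteq> 0 \<longrightarrow> snd q = lift_list G f (snd (fst q)) (map fst (snd q)))"

lemma lift_supp_lift: "lift_supp G f (lift G f g A)"
  by (simp add: lift_supp_def lift_def)

lemma lift_supp_hat: "lift_supp G f (hat_sum G f A)"
  unfolding lift_supp_def hat_sum_def
proof (intro allI impI)
  fix q assume "(\<Sum>g\<in>carrier G. lift G f g A q) \<noteq> 0"
  then obtain g where "lift G f g A q \<noteq> 0" by (meson sum.neutral)
  then show "snd q = lift_list G f (snd (fst q)) (map fst (snd q))"
    by (simp add: lift_def split: if_splits)
qed

lemma core:
  assumes ls: "lift_supp G f F"
  shows "cpa_mult (sk_tgt G tgt f) F (lift G f g B) ((v,g0),ys) =
   (if g0 = g \<and> ys = lift_list G f g (map fst ys) then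
     (\<Sum>i\<le>length ys. F ((path_end tgt (v, take i (map fst ys)), lend G f g (take i (map fst ys))),
          lift_list G f (lend G f g (take i (map fst ys))) (drop i (map fst ys))) * B (v, take i (map fst ys)))
    else 0)"
proof (cases "g0 = g \<and> ys = lift_list G f g (map fst ys)")
  case True
  define xs where "xs = map fst ys"
  have ys: "ys = lift_list G f g xs" using True xs_def by simp
  show ?thesis using True unfolding cpa_mult_def
    by (simp add: ys take_lift drop_lift pe_lift lift_def)
next
  case False
  have "cpa_mult (sk_tgt G tgt f) F (lift G f g B) ((v,g0),ys) = 0"
    unfolding cpa_mult_def
  proof (rule sum.neutral, rule ballI)
    fix i assume "i \<in> {..length (snd ((v, g0), ys))}"
    show "F (path_end (sk_tgt G tgt f) (fst ((v, g0), ys), take i (snd ((v, g0), ys))), drop i (snd ((v, g0), ys))) *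
          lift G f g B (fst ((v, g0), ys), take i (snd ((v, g0), ys))) = 0"
    proof (cases "g0 = g \<and> take i ys = lift_list G f g (map fst (take i ys))")
      case False then show ?thesis by (auto simp: lift_def)
    next
      case T: True
      define a where "a = map fst (take i ys)"
      have ti: "take i ys = lift_list G f g a" using T a_def by simp
      from \<open>\<not> (g0 = g \<and> ys = lift_list G f g (map fst ys))\<close> T cons_split[of ys G f g i]
      have nd: "drop i ys \<noteq> lift_list G f (lend G f g a) (map fst (drop i ys))"
        unfolding a_def by blast
      have pe: "path_end (sk_tgt G tgt f) ((v,g), take i ys) = (path_end tgt (v,a), lend G f g a)"
        by (simp add: ti pe_lift)
      have "F ((path_end tgt (v,a), lend G f g a), drop i ys) = 0"
        using ls nd unfolding lift_supp_def by force
      then show ?thesis using T pe by simp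
    qed
  qed
  then show ?thesis using False by auto
qed




definition good_deg :: "('g,'b) monoid_scheme \<Rightarrow> ('a \<Rightarrow> 'g) \<Rightarrow> ('v \<times> 'a list \<Rightarrow> 'k::zero) \<Rightarrow> 'g \<Rightarrow> bool" where
  "good_deg G f B h \<longleftrightarrow> (\<forall>p. B p \<noteq> 0 \<longrightarrow> (\<forall>x\<in>set (snd p). f x \<in> carrier G) \<and> path_img G f (snd p) = h)"

lemma path_img_Nil[simp]: "path_img G f [] = \<one>\<^bsub>G\<^esub>"
  and path_img_Cons[simp]: "path_img G f (x#xs) = f x \<otimes>\<^bsub>G\<^esub> path_img G f xs"
  by (simp_all add: path_img_def)

lemma path_img_closed: "group G \<Longrightarrow> \<forall>x\<in>set xs. f x \<in> carrier G \<Longrightarrow> path_img G f xs \<in> carrier G"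
  by (induction xs) (auto intro: group.is_monoid monoid.m_closed)

lemma path_img_append: "group G \<Longrightarrow> \<forall>x\<in>set as. f x \<in> carrier G \<Longrightarrow> \<forall>x\<in>set bs. f x \<in> carrier G \<Longrightarrow>
   path_img G f (as @ bs) = path_img G f as \<otimes>\<^bsub>G\<^esub> path_img G f bs"
proof (induction as)
  case Nil then show ?case using path_img_closed[of G bs f] by (simp add: group.is_monoid monoid.l_one)
next
  case (Cons a as)
  then show ?case using path_img_closed[of G as f] path_img_closed[of G bs f]
    by (simp add: group.is_monoid monoid.m_assoc)
qed

lemma lend_img: "group G \<Longrightarrow> g \<in> carrier G \<Longrightarrow> \<forall>x\<in>set xs. f x \<in> carrier G \<Longrightarrow>
   lend G f g xs = g \<otimes>\<^bsub>G\<^esub> path_img G f xs"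
proof (induction xs arbitrary: g)
  case Nil then show ?case by (simp add: group.is_monoid monoid.r_one)
next
  case (Cons x xs)
  have "f x \<in> carrier G" using Cons.prems by simp
  then have "lend G f g (x#xs) = (g \<otimes>\<^bsub>G\<^esub> f x) \<otimes>\<^bsub>G\<^esub> path_img G f xs"
    using Cons by (simp add: group.is_monoid monoid.m_closed)
  then show ?case using Cons.prems path_img_closed[of G xs f] \<open>f x \<in> carrier G\<close>
    by (simp add: group.is_monoid monoid.m_assoc)
qed

lemma lend_closed: "group G \<Longrightarrow> g \<in> carrier G \<Longrightarrow> \<forall>x\<in>set xs. f x \<in> carrier G \<Longrightarrow>
   lend G f g xs \<in> carrier G"
  using lend_img path_img_closed by (metis group.is_monoid monoid.m_closed)

lemma mult_lift:
  fixes tgt :: "'a \<Rightarrow> 'v" and G :: "('g,'b) monoid_scheme" and f :: "'a \<Rightarrow> 'g"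
  assumes grp: "group G" and g: "g \<in> carrier G" and good: "good_deg G f B h"
  shows "cpa_mult (sk_tgt G tgt f) (lift G f g' A) (lift G f g B) =
     (if g' = g \<otimes>\<^bsub>G\<^esub> h then lift G f g (cpa_mult tgt A B) else (\<lambda>_. 0))"
proof (rule ext)
  fix q :: "('v \<times> 'g) \<times> ('a \<times> 'g) list"
  obtain v g0 ys where q: "q = ((v,g0),ys)" by (metis prod.collapse)
  have tm: "lift G f g' A ((path_end tgt (v, take i xs), lend G f g (take i xs)),
          lift_list G f (lend G f g (take i xs)) (drop i xs)) * B (v, take i xs)
      = (if g' = g \<otimes>\<^bsub>G\<^esub> h then A (path_end tgt (v, take i xs), drop i xs) * B (v, take i xs) else 0)"
    for i xs
  proof (cases "B (v, take i xs) = 0")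
    case True then show ?thesis by simp
  next
    case False
    with good have "\<forall>x\<in>set (take i xs). f x \<in> carrier G" "path_img G f (take i xs) = h"
      unfolding good_deg_def by auto
    then have "lend G f g (take i xs) = g \<otimes>\<^bsub>G\<^esub> h" using lend_img[OF grp g] by auto
    then show ?thesis by (auto simp: lift_at)
  qed
  show "cpa_mult (sk_tgt G tgt f) (lift G f g' A) (lift G f g B) q =
     (if g' = g \<otimes>\<^bsub>G\<^esub> h then lift G f g (cpa_mult tgt A B) else (\<lambda>_. 0)) q"
    unfolding q core[OF lift_supp_lift] tm
    by (auto simp: lift_at cpa_mult_def)
qed

lemma mult_hat_left:
  fixes tgt :: "'a \<Rightarrow> 'v" and G :: "('g,'b) monoid_scheme" and f :: "'a \<Rightarrow> 'g"
  assumes grp: "group G" and g: "g \<in> carrier G" and fin: "finite (carrier G)"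
    and Y: "\<forall>p. Y p \<noteq> 0 \<longrightarrow> (\<forall>x\<in>set (snd p). f x \<in> carrier G)"
  shows "cpa_mult (sk_tgt G tgt f) (hat_sum G f W) (lift G f g Y) = lift G f g (cpa_mult tgt W Y)"
proof (rule ext)
  fix q :: "('v \<times> 'g) \<times> ('a \<times> 'g) list"
  obtain v g0 ys where q: "q = ((v,g0),ys)" by (metis prod.collapse)
  have tm: "hat_sum G f W ((path_end tgt (v, take i xs), lend G f g (take i xs)),
          lift_list G f (lend G f g (take i xs)) (drop i xs)) * Y (v, take i xs)
      = W (path_end tgt (v, take i xs), drop i xs) * Y (v, take i xs)"
    for i xs
  proof (cases "Y (v, take i xs) = 0")
    case True then show ?thesis by simp
  next
    case False
    with Y have "\<forall>x\<in>set (take i xs). f x \<in> carrier G" by auto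
    then have c: "lend G f g (take i xs) \<in> carrier G" using lend_closed[OF grp g] by auto
    have "hat_sum G f W ((path_end tgt (v, take i xs), lend G f g (take i xs)),
          lift_list G f (lend G f g (take i xs)) (drop i xs)) =
       (\<Sum>k\<in>carrier G. if lend G f g (take i xs) = k then W (path_end tgt (v, take i xs), drop i xs) else 0)"
      unfolding hat_sum_def by (intro sum.cong) (auto simp: lift_at)
    also have "\<dots> = W (path_end tgt (v, take i xs), drop i xs)" using c fin by simp
    finally show ?thesis by simp
  qed
  show "cpa_mult (sk_tgt G tgt f) (hat_sum G f W) (lift G f g Y) q = lift G f g (cpa_mult tgt W Y) q"
    unfolding q core[OF lift_supp_hat] tm
    by (auto simp: lift_at cpa_mult_def)
qed

lemma mult_sum_right: "cpa_mult tgt F (\<lambda>p. \<Sum>k\<in>A. B k p) = (\<lambda>p. \<Sum>k\<in>A. cpa_mult tgt F (B k) p)"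
  unfolding cpa_mult_def by (rule ext) (simp add: sum_distrib_left sum.swap[of _ A])

lemma mult_sum_left: "cpa_mult tgt (\<lambda>p. \<Sum>k\<in>A. F k p) B = (\<lambda>p. \<Sum>k\<in>A. cpa_mult tgt (F k) B p)"
  unfolding cpa_mult_def by (rule ext) (simp add: sum_distrib_right sum.swap[of _ A])

lemma mult_hat_right:
  assumes grp: "group G" and g: "g \<in> carrier G" and fin: "finite (carrier G)" and W: "good_deg G f W \<one>\<^bsub>G\<^esub>"
  shows "cpa_mult (sk_tgt G tgt f) (lift G f g Y) (hat_sum G f W) = lift G f g (cpa_mult tgt Y W)"
proof -
  have "cpa_mult (sk_tgt G tgt f) (lift G f g Y) (hat_sum G f W) =
     (\<lambda>q. \<Sum>k\<in>carrier G. cpa_mult (sk_tgt G tgt f) (lift G f g Y) (lift G f k W) q)"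
    unfolding hat_sum_def by (rule mult_sum_right)
  also have "\<dots> = (\<lambda>q. \<Sum>k\<in>carrier G. if g = k then lift G f k (cpa_mult tgt Y W) q else 0)"
    by (intro ext sum.cong refl) (simp add: mult_lift[OF grp _ W] grp group.is_monoid monoid.r_one)
  also have "\<dots> = lift G f g (cpa_mult tgt Y W)" using g fin by (intro ext) simp
  finally show ?thesis .
qed




lemma lift_zero: "lift G f g (\<lambda>_. 0) = (\<lambda>_. 0)" by (rule ext) (simp add: lift_def)
lemma lift_add: "lift G f g (\<lambda>p. (A p::'k::comm_ring_1) + B p) = (\<lambda>q. lift G f g A q + lift G f g B q)"
  by (rule ext) (simp add: lift_def)
lemma lift_diff: "lift G f g (\<lambda>p. (A p::'k::comm_ring_1) - B p) = (\<lambda>q. lift G f g A q - lift G f g B q)"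
  by (rule ext) (simp add: lift_def)
lemma lift_sum: "lift G f g (\<lambda>p. \<Sum>k\<in>S. (B k p::'k::comm_ring_1)) = (\<lambda>q. \<Sum>k\<in>S. lift G f g (B k) q)"
  by (rule ext) (auto simp: lift_def)

lemma set_lift: "group G \<Longrightarrow> g \<in> carrier G \<Longrightarrow> set xs \<subseteq> E \<Longrightarrow> \<forall>x\<in>E. f x \<in> carrier G \<Longrightarrow>
   set (lift_list G f g xs) \<subseteq> E \<times> carrier G"
  by (induction xs arbitrary: g) (auto intro: group.is_monoid monoid.m_closed)

lemma cpa_lift:
  fixes tgt src :: "'a \<Rightarrow> 'v" and G :: "('g,'b) monoid_scheme" and f :: "'a \<Rightarrow> 'g"
  assumes grp: "group G" and fE: "\<forall>x\<in>E. f x \<in> carrier G" and g: "g \<in> carrier G"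
    and A: "A \<in> cpa V E src tgt"
  shows "lift G f g A \<in> cpa (V \<times> carrier G) (E \<times> carrier G) (sk_src src) (sk_tgt G tgt f)"
  unfolding cpa_def
proof (intro CollectI allI impI)
  fix q :: "('v \<times> 'g) \<times> ('a \<times> 'g) list"
  assume np: "\<not> is_path (V \<times> carrier G) (E \<times> carrier G) (sk_src src) (sk_tgt G tgt f) q"
  obtain v g0 ys where q: "q = ((v,g0),ys)" by (metis prod.collapse)
  show "lift G f g A q = 0"
  proof (rule ccontr)
    assume nz: "lift G f g A q \<noteq> 0"
    then have e: "g0 = g" "ys = lift_list G f g (map fst ys)" and Anz: "A (v, map fst ys) \<noteq> 0"
      by (auto simp: q lift_at split: if_splits)
    from Anz A have p: "is_path V E src tgt (v, map fst ys)" unfolding cpa_def by auto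
    have "is_path (V \<times> carrier G) (E \<times> carrier G) (sk_src src) (sk_tgt G tgt f) ((v,g), lift_list G f g (map fst ys))"
      using p set_lift[OF grp g _ fE, of "map fst ys"] chain_lift[of src G tgt f v g "map fst ys"] g
      by (auto simp: is_path_def)
    with np e q show False by simp
  qed
qed

lemma cpa_sum: "\<forall>k\<in>S. B k \<in> cpa V E src tgt \<Longrightarrow> (\<lambda>p. \<Sum>k\<in>S. B k p) \<in> cpa V E src tgt"
  by (simp add: cpa_def)

lemma ci_zero: "(\<lambda>_. 0) \<in> closed_ideal V E src tgt S"
  unfolding closed_ideal_def cpa_def by (auto intro: gen_ideal.zero)



lemma ci_add: assumes X: "X \<in> closed_ideal V E src tgt S" and Y: "Y \<in> closed_ideal V E src tgt S"
  shows "(\<lambda>p. X p + Y p) \<in> closed_ideal V E src tgt S"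
  unfolding closed_ideal_def
proof (intro CollectI conjI allI)
  show "(\<lambda>p. X p + Y p) \<in> cpa V E src tgt" using X Y by (simp add: closed_ideal_def cpa_def)
  fix n
  obtain X' where X': "X' \<in> gen_ideal V E src tgt S" "\<forall>p. length (snd p) < n \<longrightarrow> X p = X' p"
    using X unfolding closed_ideal_def by blast
  obtain Y' where Y': "Y' \<in> gen_ideal V E src tgt S" "\<forall>p. length (snd p) < n \<longrightarrow> Y p = Y' p"
    using Y unfolding closed_ideal_def by blast
  show "\<exists>Z\<in>gen_ideal V E src tgt S. \<forall>p. length (snd p) < n \<longrightarrow> X p + Y p = Z p"
    using X' Y' by (intro bexI[of _ "\<lambda>p. X' p + Y' p"]) (auto intro: gen_ideal.add)
qed

lemma ci_sum: "finite T \<Longrightarrow> \<forall>k\<in>T. B k \<in> closed_ideal V E src tgt S \<Longrightarrow>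
   (\<lambda>p. \<Sum>k\<in>T. B k p) \<in> closed_ideal V E src tgt S"
proof (induction T rule: finite_induct)
  case empty then show ?case using ci_zero by simp
next
  case (insert x F) then show ?case using ci_add[of "B x" V E src tgt S "\<lambda>p. \<Sum>k\<in>F. B k p"] by simp
qed

lemma gen_sum: "finite T \<Longrightarrow> \<forall>k\<in>T. B k \<in> gen_ideal V E src tgt S \<Longrightarrow>
   (\<lambda>p. \<Sum>k\<in>T. B k p) \<in> gen_ideal V E src tgt S"
proof (induction T rule: finite_induct)
  case empty then show ?case using gen_ideal.zero by simp
next
  case (insert x F) then show ?case using gen_ideal.add[of "B x" V E src tgt S "\<lambda>p. \<Sum>k\<in>F. B k p"] by simp
qed




lemma cpa_nz: "A \<in> cpa V E src tgt \<Longrightarrow> A p \<noteq> 0 \<Longrightarrow> is_path V E src tgt p"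
  unfolding cpa_def by blast

lemma cpa_fv: "A \<in> cpa V E src tgt \<Longrightarrow> \<forall>x\<in>E. f x \<in> carrier G \<Longrightarrow> A p \<noteq> 0 \<Longrightarrow> \<forall>x\<in>set (snd p). f x \<in> carrier G"
  using cpa_nz unfolding is_path_def by blast

lemma lift_gen:
  fixes G :: "('g,'b) monoid_scheme" and src tgt :: "'a \<Rightarrow> 'v" and f :: "'a \<Rightarrow> 'g"
    and P :: "nat \<Rightarrow> 'v \<times> 'a list \<Rightarrow> 'k::field"
  assumes grp: "group G" and fin: "finite (carrier G)" and fE: "\<forall>x\<in>E. f x \<in> carrier G"
    and hP: "\<forall>l\<in>{1..K}. P l \<in> cpa V E src tgt \<and> (\<exists>k\<in>carrier G. good_deg G f (P l) k)"
  shows "x \<in> gen_ideal V E src tgt {P l |l. l \<in> {1..K}} \<Longrightarrow> g \<in> carrier G \<Longrightarrow>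
     lift G f g x \<in> gen_ideal (V \<times> carrier G) (E \<times> carrier G) (sk_src src) (sk_tgt G tgt f)
        {lift G f g (P l) |g l. g \<in> carrier G \<and> l \<in> {1..K}}"
proof (induction x arbitrary: g rule: gen_ideal.induct)
  case zero then show ?case by (simp add: lift_zero gen_ideal.zero)
next
  case (add x y) then show ?case by (simp add: lift_add gen_ideal.add)
next
  case (gen r a b)
  note g = gen.prems
  from gen.hyps(1) obtain l where l: "l \<in> {1..K}" and r: "r = P l" by auto
  from hP l have "\<exists>k\<in>carrier G. good_deg G f (P l) k" by blast
  then obtain k where k: "k \<in> carrier G" and gr: "good_deg G f r k" using r by blast
  define bh where "bh h = (\<lambda>p. if path_img G f (snd p) = h then b p else 0)" for h
  have bfv: "b p \<noteq> 0 \<Longrightarrow> \<forall>x\<in>set (snd p). f x \<in> carrier G" for p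
    using cpa_fv[OF gen.hyps(3) fE] by blast
  have b_eq: "b = (\<lambda>p. \<Sum>h\<in>carrier G. bh h p)"
  proof (rule ext)
    fix p show "b p = (\<Sum>h\<in>carrier G. bh h p)"
    proof (cases "b p = 0")
      case True show ?thesis unfolding bh_def True by simp
    next
      case False
      have "path_img G f (snd p) \<in> carrier G" using path_img_closed[OF grp bfv[OF False]] .
      then show ?thesis unfolding bh_def sum.delta'[OF fin] by simp
    qed
  qed
  have good_bh: "good_deg G f (bh h) h" for h using bfv unfolding good_deg_def bh_def by auto
  have bh_cpa: "bh h \<in> cpa V E src tgt" for h using gen.hyps(3) unfolding cpa_def bh_def by auto
  have good_rb: "good_deg G f (cpa_mult tgt r (bh h)) (h \<otimes>\<^bsub>G\<^esub> k)" for h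
    unfolding good_deg_def
  proof (intro allI impI)
    fix p :: "'v \<times> 'a list" assume nz: "cpa_mult tgt r (bh h) p \<noteq> 0"
    then obtain i where "r (path_end tgt (fst p, take i (snd p)), drop i (snd p)) * bh h (fst p, take i (snd p)) \<noteq> 0"
      unfolding cpa_mult_def by (meson sum.neutral)
    then have r0: "r (path_end tgt (fst p, take i (snd p)), drop i (snd p)) \<noteq> 0"
      and b0: "bh h (fst p, take i (snd p)) \<noteq> 0" by auto
    from gr r0 have d: "\<forall>x\<in>set (drop i (snd p)). f x \<in> carrier G" "path_img G f (drop i (snd p)) = k"
      unfolding good_deg_def by auto
    from good_bh[of h] b0 have t: "\<forall>x\<in>set (take i (snd p)). f x \<in> carrier G" "path_img G f (take i (snd p)) = h"
      unfolding good_deg_def by auto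
    have s: "\<forall>x\<in>set (snd p). f x \<in> carrier G" using d t by (metis append_take_drop_id set_append Un_iff)
    have "path_img G f (snd p) = path_img G f (take i (snd p) @ drop i (snd p))" by simp
    also have "\<dots> = h \<otimes>\<^bsub>G\<^esub> k" using path_img_append[OF grp t(1) d(1)] t d by simp
    finally show "(\<forall>x\<in>set (snd p). f x \<in> carrier G) \<and> path_img G f (snd p) = h \<otimes>\<^bsub>G\<^esub> k" using s by simp
  qed
  have "lift G f g (cpa_mult tgt a (cpa_mult tgt r b)) =
      (\<lambda>q. \<Sum>h\<in>carrier G. lift G f g (cpa_mult tgt a (cpa_mult tgt r (bh h))) q)"
    by (subst b_eq) (simp add: mult_sum_right lift_sum)
  also have "\<dots> = (\<lambda>q. \<Sum>h\<in>carrier G. cpa_mult (sk_tgt G tgt f) (lift G f (g \<otimes>\<^bsub>G\<^esub> (h \<otimes>\<^bsub>G\<^esub> k)) a)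
        (cpa_mult (sk_tgt G tgt f) (lift G f (g \<otimes>\<^bsub>G\<^esub> h) r) (lift G f g (bh h))) q)"
  proof (intro ext sum.cong refl)
    fix q h
    have "cpa_mult (sk_tgt G tgt f) (lift G f (g \<otimes>\<^bsub>G\<^esub> h) r) (lift G f g (bh h)) = lift G f g (cpa_mult tgt r (bh h))"
      using mult_lift[OF grp g good_bh] by simp
    moreover have "cpa_mult (sk_tgt G tgt f) (lift G f (g \<otimes>\<^bsub>G\<^esub> (h \<otimes>\<^bsub>G\<^esub> k)) a) (lift G f g (cpa_mult tgt r (bh h)))
       = lift G f g (cpa_mult tgt a (cpa_mult tgt r (bh h)))"
      using mult_lift[OF grp g good_rb] by simp
    ultimately show "lift G f g (cpa_mult tgt a (cpa_mult tgt r (bh h))) q =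
      cpa_mult (sk_tgt G tgt f) (lift G f (g \<otimes>\<^bsub>G\<^esub> (h \<otimes>\<^bsub>G\<^esub> k)) a)
        (cpa_mult (sk_tgt G tgt f) (lift G f (g \<otimes>\<^bsub>G\<^esub> h) r) (lift G f g (bh h))) q" by simp
  qed
  finally have eq: "lift G f g (cpa_mult tgt a (cpa_mult tgt r b)) = \<dots>" .
  have mem: "\<forall>h\<in>carrier G. cpa_mult (sk_tgt G tgt f) (lift G f (g \<otimes>\<^bsub>G\<^esub> (h \<otimes>\<^bsub>G\<^esub> k)) a)
        (cpa_mult (sk_tgt G tgt f) (lift G f (g \<otimes>\<^bsub>G\<^esub> h) r) (lift G f g (bh h))) \<in>
      gen_ideal (V \<times> carrier G) (E \<times> carrier G) (sk_src src) (sk_tgt G tgt f)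
        {lift G f g (P l) |g l. g \<in> carrier G \<and> l \<in> {1..K}}"
  proof
    fix h assume h: "h \<in> carrier G"
    have c1: "g \<otimes>\<^bsub>G\<^esub> h \<in> carrier G" using g h grp by (simp add: group.is_monoid monoid.m_closed)
    have c2: "g \<otimes>\<^bsub>G\<^esub> (h \<otimes>\<^bsub>G\<^esub> k) \<in> carrier G" using g h k grp by (simp add: group.is_monoid monoid.m_closed)
    show "cpa_mult (sk_tgt G tgt f) (lift G f (g \<otimes>\<^bsub>G\<^esub> (h \<otimes>\<^bsub>G\<^esub> k)) a)
        (cpa_mult (sk_tgt G tgt f) (lift G f (g \<otimes>\<^bsub>G\<^esub> h) r) (lift G f g (bh h))) \<in>
      gen_ideal (V \<times> carrier G) (E \<times> carrier G) (sk_src src) (sk_tgt G tgt f)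
        {lift G f g (P l) |g l. g \<in> carrier G \<and> l \<in> {1..K}}"
    proof (rule gen_ideal.gen)
      show "lift G f (g \<otimes>\<^bsub>G\<^esub> h) r \<in> {lift G f g (P l) |g l. g \<in> carrier G \<and> l \<in> {1..K}}"
        using c1 l r by blast
      show "lift G f (g \<otimes>\<^bsub>G\<^esub> (h \<otimes>\<^bsub>G\<^esub> k)) a \<in> cpa (V \<times> carrier G) (E \<times> carrier G) (sk_src src) (sk_tgt G tgt f)"
        by (rule cpa_lift[OF grp fE c2 gen.hyps(2)])
      show "lift G f g (bh h) \<in> cpa (V \<times> carrier G) (E \<times> carrier G) (sk_src src) (sk_tgt G tgt f)"
        by (rule cpa_lift[OF grp fE g bh_cpa])
    qed
  qed
  show ?case unfolding eq by (rule gen_sum[OF fin mem])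
qed




lemma lift_ci:
  fixes G :: "('g,'b) monoid_scheme" and src tgt :: "'a \<Rightarrow> 'v" and f :: "'a \<Rightarrow> 'g"
    and P :: "nat \<Rightarrow> 'v \<times> 'a list \<Rightarrow> 'k::field"
  assumes grp: "group G" and fin: "finite (carrier G)" and fE: "\<forall>x\<in>E. f x \<in> carrier G"
    and hP: "\<forall>l\<in>{1..K}. P l \<in> cpa V E src tgt \<and> (\<exists>k\<in>carrier G. good_deg G f (P l) k)"
    and X: "X \<in> closed_ideal V E src tgt {P l |l. l \<in> {1..K}}" and g: "g \<in> carrier G"
  shows "lift G f g X \<in> closed_ideal (V \<times> carrier G) (E \<times> carrier G) (sk_src src) (sk_tgt G tgt f)
        {lift G f g (P l) |g l. g \<in> carrier G \<and> l \<in> {1..K}}"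
  unfolding closed_ideal_def
proof (intro CollectI conjI allI)
  show "lift G f g X \<in> cpa (V \<times> carrier G) (E \<times> carrier G) (sk_src src) (sk_tgt G tgt f)"
    using X cpa_lift[OF grp fE g] unfolding closed_ideal_def by blast
  fix n
  obtain Y where Y: "Y \<in> gen_ideal V E src tgt {P l |l. l \<in> {1..K}}" "\<forall>p. length (snd p) < n \<longrightarrow> X p = Y p"
    using X unfolding closed_ideal_def by blast
  have "lift G f g Y \<in> gen_ideal (V \<times> carrier G) (E \<times> carrier G) (sk_src src) (sk_tgt G tgt f)
        {lift G f g (P l) |g l. g \<in> carrier G \<and> l \<in> {1..K}}"
    by (rule lift_gen[OF grp fin fE hP Y(1) g])
  moreover have "\<forall>q. length (snd q) < n \<longrightarrow> lift G f g X q = lift G f g Y q"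
    using Y(2) by (simp add: lift_def)
  ultimately show "\<exists>Z\<in>gen_ideal (V \<times> carrier G) (E \<times> carrier G) (sk_src src) (sk_tgt G tgt f)
        {lift G f g (P l) |g l. g \<in> carrier G \<and> l \<in> {1..K}}.
        \<forall>q. length (snd q) < n \<longrightarrow> lift G f g X q = Z q" by blast
qed

lemma decomp:
  fixes G :: "('g,'b) monoid_scheme" and src tgt :: "'a \<Rightarrow> 'v" and f :: "'a \<Rightarrow> 'g"
    and X :: "('v \<times> 'g) \<times> ('a \<times> 'g) list \<Rightarrow> 'k::comm_ring_1"
  assumes fin: "finite (carrier G)"
    and X: "X \<in> cpa (V \<times> carrier G) (E \<times> carrier G) (sk_src src) (sk_tgt G tgt f)"
  shows "X = (\<lambda>q. \<Sum>g\<in>carrier G. lift G f g (\<lambda>p. X ((fst p, g), lift_list G f g (snd p))) q)"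
proof (rule ext)
  fix q :: "('v \<times> 'g) \<times> ('a \<times> 'g) list"
  obtain v g0 ys where q: "q = ((v,g0),ys)" by (metis prod.collapse)
  have "(\<Sum>g\<in>carrier G. lift G f g (\<lambda>p. X ((fst p, g), lift_list G f g (snd p))) q) =
     (\<Sum>g\<in>carrier G. if g0 = g then (if ys = lift_list G f g0 (map fst ys) then X q else 0) else 0)"
    by (intro sum.cong refl) (auto simp: q lift_at)
  also have "\<dots> = (if g0 \<in> carrier G \<and> ys = lift_list G f g0 (map fst ys) then X q else 0)"
    using fin by simp
  also have "\<dots> = X q"
  proof (cases "X q = 0")
    case False
    then have "is_path (V \<times> carrier G) (E \<times> carrier G) (sk_src src) (sk_tgt G tgt f) q"
      using cpa_nz[OF X] by blast
    then have "g0 \<in> carrier G" "chain (sk_src src) (sk_tgt G tgt f) (v,g0) ys"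
      unfolding is_path_def q by auto
    then show ?thesis using chain_sk_lift[of src G tgt f v g0 ys] by auto
  qed simp
  finally show "X q = (\<Sum>g\<in>carrier G. lift G f g (\<lambda>p. X ((fst p, g), lift_list G f g (snd p))) q)" by simp
qed

lemma decomp_cpa:
  fixes G :: "('g,'b) monoid_scheme" and src tgt :: "'a \<Rightarrow> 'v" and f :: "'a \<Rightarrow> 'g"
    and X :: "('v \<times> 'g) \<times> ('a \<times> 'g) list \<Rightarrow> 'k::comm_ring_1"
  assumes X: "X \<in> cpa (V \<times> carrier G) (E \<times> carrier G) (sk_src src) (sk_tgt G tgt f)"
  shows "(\<lambda>p. X ((fst p, g), lift_list G f g (snd p))) \<in> cpa V E src tgt"
  unfolding cpa_def
proof (intro CollectI allI impI)
  fix p :: "'v \<times> 'a list" assume np: "\<not> is_path V E src tgt p"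
  show "X ((fst p, g), lift_list G f g (snd p)) = 0"
  proof (rule ccontr)
    assume "X ((fst p, g), lift_list G f g (snd p)) \<noteq> 0"
    then have ip: "is_path (V \<times> carrier G) (E \<times> carrier G) (sk_src src) (sk_tgt G tgt f) ((fst p, g), lift_list G f g (snd p))"
      using cpa_nz[OF X] by blast
    then have "set (lift_list G f g (snd p)) \<subseteq> E \<times> carrier G" unfolding is_path_def by auto
    then have "fst ` set (lift_list G f g (snd p)) \<subseteq> E" by auto
    then have "set (snd p) \<subseteq> E" by (metis map_fst_lift set_map)
    with ip chain_lift[of src G tgt f "fst p" g "snd p"] have "is_path V E src tgt p"
      unfolding is_path_def by auto
    with np show False by simp
  qed
qed




theorem proposition7p9:
  fixes G :: "('g, 'b) monoid_scheme"
    and V :: "'v set" and E :: "'a set" and src tgt :: "'a \<Rightarrow> 'v"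
    and f :: "'a \<Rightarrow> 'g" and K :: nat
    and P :: "nat \<Rightarrow> 'v \<times> 'a list \<Rightarrow> 'k::field"
    and W :: "'v \<times> 'a list \<Rightarrow> 'k"
  assumes "finite V" and "finite E"
    and "src ` E \<subseteq> V" and "tgt ` E \<subseteq> V"
    and "group G" and "finite (carrier G)"
    and "\<forall>l\<in>{1..K}. P l \<in> cpa V E src tgt"
    and "formal_dual_action G E f P K"
    and "W \<in> cpa V E src tgt"
    and "invariant_rep G f W"
    and "central_mod V E src tgt {P l | l. l \<in> {1..K}} W"
  shows "central_mod (V \<times> carrier G) (E \<times> carrier G) (sk_src src) (sk_tgt G tgt f)
           {lift G f g (P l) | g l. g \<in> carrier G \<and> l \<in> {1..K}} (hat_sum G f W)"
proof -
  note grp = assms(5) and fin = assms(6)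
  from assms(8) have fE: "\<forall>x\<in>E. f x \<in> carrier G"
    and fda2: "\<forall>l\<in>{1..K}. \<exists>g\<in>carrier G. \<forall>p. P l p \<noteq> 0 \<longrightarrow> path_img G f (snd p) = g"
    unfolding formal_dual_action_def by auto
  have hP: "\<forall>l\<in>{1..K}. P l \<in> cpa V E src tgt \<and> (\<exists>k\<in>carrier G. good_deg G f (P l) k)"
  proof
    fix l assume l: "l \<in> {1..K}"
    then have Pc: "P l \<in> cpa V E src tgt" using assms(7) by blast
    from fda2 l obtain k where k: "k \<in> carrier G" "\<forall>p. P l p \<noteq> 0 \<longrightarrow> path_img G f (snd p) = k" by blast
    then have "good_deg G f (P l) k" unfolding good_deg_def using cpa_fv[OF Pc fE] by blast
    with Pc k(1) show "P l \<in> cpa V E src tgt \<and> (\<exists>k\<in>carrier G. good_deg G f (P l) k)" by blast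
  qed
  have goodW: "good_deg G f W \<one>\<^bsub>G\<^esub>"
    using assms(10) cpa_fv[OF assms(9) fE] unfolding invariant_rep_def good_deg_def by blast
  have hatc: "hat_sum G f W \<in> cpa (V \<times> carrier G) (E \<times> carrier G) (sk_src src) (sk_tgt G tgt f)"
    unfolding hat_sum_def by (rule cpa_sum) (auto intro: cpa_lift[OF grp fE _ assms(9)])
  have cent: "\<forall>X\<in>cpa V E src tgt. (\<lambda>p. cpa_mult tgt W X p - cpa_mult tgt X W p) \<in> closed_ideal V E src tgt {P l | l. l \<in> {1..K}}"
    using assms(11) unfolding central_mod_def by blast
  show ?thesis unfolding central_mod_def
  proof (intro conjI ballI)
    show "hat_sum G f W \<in> cpa (V \<times> carrier G) (E \<times> carrier G) (sk_src src) (sk_tgt G tgt f)" by (rule hatc)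
    fix X :: "('v \<times> 'g) \<times> ('a \<times> 'g) list \<Rightarrow> 'k" assume X: "X \<in> cpa (V \<times> carrier G) (E \<times> carrier G) (sk_src src) (sk_tgt G tgt f)"
    define Y where "Y g = (\<lambda>p. X ((fst p, g), lift_list G f g (snd p)))" for g
    have Xd: "X = (\<lambda>q. \<Sum>g\<in>carrier G. lift G f g (Y g) q)" unfolding Y_def by (rule decomp[OF fin X])
    have Yc: "Y g \<in> cpa V E src tgt" for g unfolding Y_def by (rule decomp_cpa[OF X])
    have Yfv: "\<forall>p. Y g p \<noteq> 0 \<longrightarrow> (\<forall>x\<in>set (snd p). f x \<in> carrier G)" for g
      using cpa_fv[OF Yc fE] by blast
    have L: "cpa_mult (sk_tgt G tgt f) (hat_sum G f W) X = (\<lambda>q. \<Sum>g\<in>carrier G. lift G f g (cpa_mult tgt W (Y g)) q)"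
    proof -
      have "cpa_mult (sk_tgt G tgt f) (hat_sum G f W) X =
         (\<lambda>q. \<Sum>g\<in>carrier G. cpa_mult (sk_tgt G tgt f) (hat_sum G f W) (lift G f g (Y g)) q)"
        by (subst Xd, rule mult_sum_right)
      also have "\<dots> = (\<lambda>q. \<Sum>g\<in>carrier G. lift G f g (cpa_mult tgt W (Y g)) q)"
        by (intro ext sum.cong refl) (simp add: mult_hat_left[OF grp _ fin Yfv])
      finally show ?thesis .
    qed
    have R: "cpa_mult (sk_tgt G tgt f) X (hat_sum G f W) = (\<lambda>q. \<Sum>g\<in>carrier G. lift G f g (cpa_mult tgt (Y g) W) q)"
    proof -
      have "cpa_mult (sk_tgt G tgt f) X (hat_sum G f W) =
         (\<lambda>q. \<Sum>g\<in>carrier G. cpa_mult (sk_tgt G tgt f) (lift G f g (Y g)) (hat_sum G f W) q)"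
        by (subst Xd, rule mult_sum_left)
      also have "\<dots> = (\<lambda>q. \<Sum>g\<in>carrier G. lift G f g (cpa_mult tgt (Y g) W) q)"
        by (intro ext sum.cong refl) (simp add: mult_hat_right[OF grp _ fin goodW])
      finally show ?thesis .
    qed
    have eq: "(\<lambda>p. cpa_mult (sk_tgt G tgt f) (hat_sum G f W) X p - cpa_mult (sk_tgt G tgt f) X (hat_sum G f W) p)
      = (\<lambda>q. \<Sum>g\<in>carrier G. lift G f g (\<lambda>p. cpa_mult tgt W (Y g) p - cpa_mult tgt (Y g) W p) q)"
      unfolding lift_diff L R by (simp add: sum_subtractf)
    show "(\<lambda>p. cpa_mult (sk_tgt G tgt f) (hat_sum G f W) X p - cpa_mult (sk_tgt G tgt f) X (hat_sum G f W) p)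
      \<in> closed_ideal (V \<times> carrier G) (E \<times> carrier G) (sk_src src) (sk_tgt G tgt f)
           {lift G f g (P l) | g l. g \<in> carrier G \<and> l \<in> {1..K}}"
      unfolding eq
      by (rule ci_sum[OF fin]) (use cent Yc in \<open>blast intro: lift_ci[OF grp fin fE hP]\<close>)
  qed
qed


end
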